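(* Let $n\ge 1$, $d\ge r\ge 1$, let $\mathrm{St}(d,r)=\{x\in\mathbb{R}^{d\times r}: x^\top x=I_r\}$ with tangent spaces $\mathrm{T}_x\mathcal{M}=\{\xi\in\mathbb{R}^{d\times r}: x^\top\xi+\xi^\top x=0\}$, and let $W\in\mathbb{R}^{n\times n}$ be a symmetric, nonnegative, doubly stochastic matrix and $t\ge 1$ an integer. Let $\mathcal{R}$ be a retraction on $\mathrm{St}(d,r)$ and $M>0$ a constant such that $\|\mathcal{R}_x(\xi)-(x+\xi)\|_F\le M\|\xi\|_F^2$ for all $x\in\mathrm{St}(d,r)$, $\xi\in \mathrm{T}_x\mathcal{M}$. Let $\delta_1,\delta_2>0$ satisfy $\delta_1\le \frac{1}{5\sqrt r}\delta_2$ and $\delta_2\le \frac16$. Suppose $\mathbf{x}_k=(x_{1,k},\dots,x_{n,k})\in\mathcal{N}$ and $\mathbf{x}_{k+1}=(x_{1,k+1},\dots,x_{n,k+1})\in\mathcal{N}_1$, where for each $i\in[n]$ $$x_{i,k+1}=\mathcal{R}_{x_{i,k}}\big(-\alpha\,\mathrm{grad}\,\varphi_i^t(\mathbf{x}_k)+\beta u_{i,k}\big),$$ with $u_{i,k}\in\mathrm{T}_{x_{i,k}}\mathcal{M}$, $0\le\alpha\le \frac1M$ and $\beta\ge 0$. Let $\mathbf{u}_k=(u_{1,k},\dots,u_{n,k})$ and $\hat u_k=\frac1n\sum_{i=1}^n u_{i,k}$. Then $$\|\bar x_k-\bar x_{k+1}\|_F\le \frac{1}{1-2\delta_1^2}\left(\frac{2L_t^2\alpha+L_t\alpha}{n}\|\mathbf{x}_k-\bar{\mathbf{x}}_k\|_F^2+\beta\|\hat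 u_k\|_F+\frac{2M\beta^2}{n}\|\mathbf{u}_k\|_F^2\right),$$ where $\bar x_k,\bar x_{k+1}$ are the induced arithmetic means of $\mathbf{x}_k$, $\mathbf{x}_{k+1}$ and $\bar{\mathbf{x}}_k=(\bar x_k,\dots,\bar x_k)$.
   Context: For $\mathbf{x}=(x_1,\dots,x_n)\in\mathrm{St}(d,r)^n$, $\|\mathbf{x}\|_F^2=\sum_i\|x_i\|_F^2$. The induced arithmetic mean (IAM) is $\bar x\in\arg\min_{y\in\mathrm{St}(d,r)}\sum_{i=1}^n\|y-x_i\|_F^2$, and $\bar{\mathbf{x}}=(\bar x,\dots,\bar x)$. The consensus function is $\varphi^t(\mathbf{x})=\frac14\sum_{i,j=1}^n W^t_{ij}\|x_i-x_j\|_F^2$, where $W^t_{ij}$ is the $(i,j)$ entry of the matrix power $W^t$; its Riemannian gradient has blocks $\mathrm{grad}\,\varphi^t_i(\mathbf{x})=\mathcal{P}_{\mathrm{T}_{x_i}\mathcal{M}}\big(x_i-\sum_{j=1}^n W^t_{ij}x_j\big)$, where $\mathcal{P}_{\mathrm{T}_{x}\mathcal{M}}(y)=y-\frac12 x(x^\top y+y^\top x)$. The constant $L_t=1-\lambda_n(W^t)$, with $\lambda_n(W^t)$ the smallest eigenvalue of $W^t$. The neighborhoods are $\mathcal{N}_1=\{\mathbf{x}\in\mathrm{St}(d,r)^n:\|\mathbf{x}-\bar{\mathbf{x}}\|_F^2\le n\delta_1^2\}$, $\mathcal{N}_2=\{\mathbf{x}\in\mathrm{St}(d,r)^n:\max_{i\in[n]}\|x_i-\bar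 x\|_F\le\delta_2\}$, and $\mathcal{N}=\mathcal{N}_1\cap\mathcal{N}_2$. *)

theory Defs
  imports "HOL-Analysis.Analysis"
begin

text \<open>Matrices in R^(d x r) are represented as real^'r^'d (rows indexed by 'd,
  columns by 'r). The HOL-Analysis norm on this type is the Frobenius norm.\<close>

fun matpow :: "real^'n^'n \<Rightarrow> nat \<Rightarrow> real^'n^'n" where
  "matpow A 0 = mat 1"
| "matpow A (Suc k) = A ** matpow A k"

definition stiefel :: "(real^'r^'d) set" where
  "stiefel = {x. transpose x ** x = mat 1}"

definition tangent_space :: "real^'r^'d \<Rightarrow> (real^'r^'d) set" where
  "tangent_space x = {\<xi>. transpose x ** \<xi> + transpose \<xi> ** x = 0}"

definition proj_tangent :: "real^'r^'d \<Rightarrow> real^'r^'d \<Rightarrow> real^'r^'d" where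
  "proj_tangent x y = y - (1/2) *\<^sub>R (x ** (transpose x ** y + transpose y ** x))"

definition is_retraction :: "(real^'r^'d \<Rightarrow> real^'r^'d \<Rightarrow> real^'r^'d) \<Rightarrow> bool" where
  "is_retraction R \<longleftrightarrow>
     (\<forall>x\<in>stiefel. (\<forall>\<xi>\<in>tangent_space x. R x \<xi> \<in> stiefel) \<and> R x 0 = x \<and>
        ((R x) has_derivative id) (at 0 within tangent_space x))"

definition is_IAM :: "('n::finite \<Rightarrow> real^'r^'d) \<Rightarrow> real^'r^'d \<Rightarrow> bool" where
  "is_IAM x y \<longleftrightarrow> y \<in> stiefel \<and>
     (\<forall>z\<in>stiefel. (\<Sum>i\<in>UNIV. (norm (y - x i))\<^sup>2) \<le> (\<Sum>i\<in>UNIV. (norm (z - x i))\<^sup>2))"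

definition grad_phi :: "real^'n^'n \<Rightarrow> nat \<Rightarrow> ('n::finite \<Rightarrow> real^'r^'d) \<Rightarrow> 'n \<Rightarrow> real^'r^'d" where
  "grad_phi W t x i = proj_tangent (x i) (x i - (\<Sum>j\<in>UNIV. (matpow W t $ i $ j) *\<^sub>R x j))"

definition min_eigenvalue :: "real^'n^'n \<Rightarrow> real" where
  "min_eigenvalue A = Min {c. \<exists>v. v \<noteq> 0 \<and> A *v v = c *\<^sub>R v}"

definition L_const :: "real^'n^'n \<Rightarrow> nat \<Rightarrow> real" where
  "L_const W t = 1 - min_eigenvalue (matpow W t)"

definition in_N1 :: "real \<Rightarrow> ('n::finite \<Rightarrow> real^'r^'d) \<Rightarrow> real^'r^'d \<Rightarrow> bool" where
  "in_N1 \<delta>1 x xbar \<longleftrightarrow> (\<forall>i. x i \<in> stiefel) \<and>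
     (\<Sum>i\<in>UNIV. (norm (x i - xbar))\<^sup>2) \<le> real CARD('n) * \<delta>1\<^sup>2"

definition in_N2 :: "real \<Rightarrow> ('n::finite \<Rightarrow> real^'r^'d) \<Rightarrow> real^'r^'d \<Rightarrow> bool" where
  "in_N2 \<delta>2 x xbar \<longleftrightarrow> (\<forall>i. x i \<in> stiefel) \<and> (\<forall>i. norm (x i - xbar) \<le> \<delta>2)"

end

theory Submission
  imports Defs
begin

lemma inner_mat_mult_left:
  fixes X :: "real^'m^'d" and Y :: "real^'r^'m" and Z :: "real^'r^'d"
  shows "inner (X ** Y) Z = inner Y (transpose X ** Z)"
  apply (simp add: inner_vec_def matrix_matrix_mult_def transpose_def sum_distrib_left
      sum_distrib_right sum.swap[of _ "UNIV::'d set"] mult_ac)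
  apply (intro sum.cong refl)
  by (rule sum.swap)

lemma inner_mat_mult_right:
  fixes X :: "real^'m^'d" and Y :: "real^'r^'m" and Z :: "real^'r^'d"
  shows "inner (X ** Y) Z = inner X (Z ** transpose Y)"
  by (simp add: inner_vec_def matrix_matrix_mult_def transpose_def sum_distrib_left
      sum_distrib_right sum.swap[of _ "UNIV::'r set"] mult_ac)

lemma inner_transpose: fixes X Y :: "real^'r^'d"
  shows "inner (transpose X) (transpose Y) = inner X Y"
  by (simp add: inner_vec_def transpose_def sum.swap[of _ "UNIV::'r set"])

lemma norm_transpose: fixes X :: "real^'r^'d"
  shows "norm (transpose X) = norm X"
  by (simp add: norm_eq_sqrt_inner inner_transpose)

lemma mat_scaleR_right: fixes X :: "real^'m^'d" and Y :: "real^'r^'m"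
  shows "X ** (c *\<^sub>R Y) = c *\<^sub>R (X ** Y)"
  by (simp add: matrix_matrix_mult_def vec_eq_iff sum_distrib_left mult_ac)

lemma mat_scaleR_left: fixes X :: "real^'m^'d" and Y :: "real^'r^'m"
  shows "(c *\<^sub>R X) ** Y = c *\<^sub>R (X ** Y)"
  by (simp add: matrix_matrix_mult_def vec_eq_iff sum_distrib_left mult_ac)

lemma mat_diff_right: fixes X :: "real^'m^'d" and Y Z :: "real^'r^'m"
  shows "X ** (Y - Z) = X ** Y - X ** Z"
  by (simp add: matrix_matrix_mult_def vec_eq_iff sum_subtractf algebra_simps)

lemma mat_diff_left: fixes X Z :: "real^'m^'d" and Y :: "real^'r^'m"
  shows "(X - Z) ** Y = X ** Y - Z ** Y"
  by (simp add: matrix_matrix_mult_def vec_eq_iff sum_subtractf algebra_simps)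

lemma mat_add_left: fixes X Z :: "real^'m^'d" and Y :: "real^'r^'m"
  shows "(X + Z) ** Y = X ** Y + Z ** Y"
  by (simp add: matrix_matrix_mult_def vec_eq_iff sum.distrib algebra_simps)

lemma mat_sum_left: fixes X :: "'i \<Rightarrow> real^'m^'d" and Y :: "real^'r^'m"
  shows "(sum X I) ** Y = (\<Sum>i\<in>I. X i ** Y)"
  by (induction I rule: infinite_finite_induct) (auto simp: mat_add_left)

lemma mat_sum_right: fixes X :: "real^'m^'d" and Y :: "'i \<Rightarrow> real^'r^'m"
  shows "X ** (sum Y I) = (\<Sum>i\<in>I. X ** Y i)"
  by (induction I rule: infinite_finite_induct) (auto simp: matrix_add_ldistrib)

lemma transpose_add: "transpose (X + Y) = transpose X + transpose (Y::real^'r^'d)"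
  by (simp add: transpose_def vec_eq_iff)

lemma transpose_diff: "transpose (X - Y) = transpose X - transpose (Y::real^'r^'d)"
  by (simp add: transpose_def vec_eq_iff)

lemma transpose_zero: "transpose (0::real^'r^'d) = 0"
  by (simp add: transpose_def vec_eq_iff)

lemma inner_mat1_gen: fixes M :: "real^'n^'n"
  shows "inner (mat 1) M = (\<Sum>i\<in>UNIV. M$i$i)"
proof -
  have "\<And>i ia. (if i = ia then 1 else 0) * M $ i $ ia = (if i = ia then M $ i $ ia else 0)" by simp
  then show ?thesis by (simp add: inner_vec_def mat_def sum.delta cong del: if_cong)
qed

lemma half_sum_zero: fixes A B C D :: "'a::real_vector"
  assumes "A + (1/2) *\<^sub>R (B + D) = B" "C + (1/2) *\<^sub>R (B + D) = D"
  shows "A + C = 0"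
proof -
  have a: "A = B - (1/2) *\<^sub>R (B + D)" using assms(1) by (simp add: eq_diff_eq)
  have c: "C = D - (1/2) *\<^sub>R (B + D)" using assms(2) by (simp add: eq_diff_eq)
  have "A + C = (B + D) - ((1/2) *\<^sub>R (B + D) + (1/2) *\<^sub>R (B + D))" unfolding a c
    by (simp add: algebra_simps)
  also have "(1/2) *\<^sub>R (B + D) + (1/2) *\<^sub>R (B + D) = B + D"
    by (simp only: scaleR_add_left[symmetric]) simp
  finally show ?thesis by simp
qed

lemma inner_mat1: fixes Y :: "real^'r^'d"
  shows "inner (mat 1) (transpose Y ** Y) = (norm Y)^2"
  unfolding inner_mat1_gen by (simp add: power2_norm_eq_inner inner_vec_def matrix_matrix_mult_def transpose_def
      sum.swap[of _ "UNIV::'d set"])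

lemma stiefel_norm: fixes x :: "real^'r^'d"
  assumes "x \<in> stiefel" shows "(norm x)^2 = real CARD('r)"
proof -
  have "(norm x)^2 = inner (mat 1) (transpose x ** x)" by (simp add: inner_mat1)
  also have "\<dots> = inner (mat 1) (mat 1 :: real^'r^'r)" using assms by (simp add: stiefel_def)
  also have "\<dots> = real CARD('r)" by (simp add: inner_vec_def mat_def if_distrib cong: if_cong)
  finally show ?thesis .
qed

lemma stiefel_norm_mult: fixes x :: "real^'r^'d" and H :: "real^'m^'r"
  assumes "x \<in> stiefel" shows "norm (x ** H) = norm H"
proof -
  have "inner (x ** H) (x ** H) = inner H H"
    using assms by (simp add: inner_mat_mult_left matrix_mul_assoc stiefel_def)
  thus ?thesis by (simp add: norm_eq_sqrt_inner)
qed

lemma tangent_inner_sym: fixes x \<xi> :: "real^'r^'d" and K :: "real^'r^'r"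
  assumes "\<xi> \<in> tangent_space x" "transpose K = K"
  shows "inner \<xi> (x ** K) = 0"
proof -
  let ?G = "transpose x ** \<xi>"
  have G: "transpose ?G = - ?G" using assms(1)
    by (simp add: tangent_space_def matrix_transpose_mul eq_neg_iff_add_eq_0 add.commute)
  have e1: "inner \<xi> (x ** K) = inner K ?G" by (subst inner_commute) (rule inner_mat_mult_left)
  have "inner K ?G = inner (transpose K) (transpose ?G)" by (simp add: inner_transpose)
  also have "\<dots> = - inner K ?G" using G assms(2) by simp
  finally show ?thesis using e1 by simp
qed

lemma tangent_add: "a \<in> tangent_space x \<Longrightarrow> b \<in> tangent_space x \<Longrightarrow> a + b \<in> tangent_space x"
  by (simp add: tangent_space_def matrix_add_ldistrib transpose_add mat_add_left algebra_simps)

lemma tangent_scale: "a \<in> tangent_space x \<Longrightarrow> c *\<^sub>R a \<in> tangent_space x"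
  by (simp add: tangent_space_def mat_scaleR_right mat_scaleR_left transpose_scalar
      scaleR_add_right[symmetric])

lemma proj_decomp: fixes x y :: "real^'r^'d"
  shows "y = proj_tangent x y + x ** ((1/2) *\<^sub>R (transpose x ** y + transpose y ** x))"
  by (simp add: proj_tangent_def mat_scaleR_right)

lemma proj_tangent_in: fixes x y :: "real^'r^'d"
  assumes "x \<in> stiefel" shows "proj_tangent x y \<in> tangent_space x"
proof -
  let ?H = "transpose x ** y + transpose y ** x"
  have H: "transpose ?H = ?H" by (simp add: transpose_add matrix_transpose_mul)
  have xx: "transpose x ** x = mat 1" using assms by (simp add: stiefel_def)
  have 1: "transpose x ** proj_tangent x y = transpose x ** y - (1/2) *\<^sub>R ?H"
    by (simp add: proj_tangent_def mat_diff_right mat_scaleR_right matrix_mul_assoc xx)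
  have 2: "transpose (proj_tangent x y) ** x = transpose y ** x - (1/2) *\<^sub>R ?H"
    using arg_cong[OF 1, of transpose]
    by (simp add: matrix_transpose_mul transpose_diff transpose_scalar H)
  show ?thesis unfolding tangent_space_def mem_Collect_eq
    by (rule half_sum_zero) (use 1 2 in \<open>simp_all add: algebra_simps\<close>)
qed

lemma proj_norm_le: fixes x y :: "real^'r^'d"
  assumes "x \<in> stiefel" shows "norm (proj_tangent x y) \<le> norm y"
proof -
  let ?K = "(1/2) *\<^sub>R (transpose x ** y + transpose y ** x)"
  have K: "transpose ?K = ?K" by (simp add: transpose_scalar transpose_add matrix_transpose_mul add.commute)
  have o: "inner (proj_tangent x y) (x ** ?K) = 0"
    by (rule tangent_inner_sym[OF proj_tangent_in[OF assms] K])
  have "(norm y)^2 = (norm (proj_tangent x y + x ** ?K))^2" using proj_decomp[of y x] by simp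
  also have "\<dots> = (norm (proj_tangent x y))^2 + (norm (x ** ?K))^2"
    using o by (simp add: power2_norm_eq_inner inner_add_left inner_add_right inner_commute)
  finally have "(norm (proj_tangent x y))^2 \<le> (norm y)^2" by simp
  thus ?thesis by (simp add: power2_le_iff_abs_le)
qed

lemma le_eps_zero: fixes c K :: real
  assumes "\<And>\<theta>. \<theta> > 0 \<Longrightarrow> c \<le> \<theta> * K" shows "c \<le> 0"
proof (rule ccontr)
  assume c: "\<not> c \<le> 0"
  show False
  proof (cases "K \<le> 0")
    case True then show ?thesis using assms[of 1] c by simp
  next
    case False
    then have "c \<le> (c / (2*K)) * K" using assms[of "c/(2*K)"] c by simp
    also have "\<dots> = c/2" using False by simp
    finally show ?thesis using c by simp
  qed
qed

lemma stiefel_dist: fixes y z :: "real^'r^'d"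
  assumes "y \<in> stiefel" "z \<in> stiefel"
  shows "(norm (y - z))\<^sup>2 = 2 * real CARD('r) - 2 * inner y z"
proof -
  have "(norm (y - z))\<^sup>2 = (norm y)\<^sup>2 - 2 * inner y z + (norm z)\<^sup>2"
    by (simp add: power2_norm_eq_inner inner_diff_left inner_diff_right inner_commute)
  thus ?thesis using stiefel_norm[OF assms(1)] stiefel_norm[OF assms(2)] by simp
qed

lemma iam_first_order:
  fixes x :: "'n::finite \<Rightarrow> real^'r^'d" and R :: "real^'r^'d \<Rightarrow> real^'r^'d \<Rightarrow> real^'r^'d" and a \<xi> :: "real^'r^'d"
  assumes iam: "is_IAM x a" and retr: "is_retraction R"
    and Mb: "\<forall>x\<in>stiefel. \<forall>\<xi>\<in>tangent_space x. norm (R x \<xi> - (x + \<xi>)) \<le> M * (norm \<xi>)\<^sup>2"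
    and xs: "\<forall>i. x i \<in> stiefel" and tan: "\<xi> \<in> tangent_space a"
  shows "inner (\<Sum>i\<in>UNIV. x i) \<xi> \<le> 0"
proof -
  let ?X = "\<Sum>i\<in>UNIV. x i"
  have a: "a \<in> stiefel" using iam by (simp add: is_IAM_def)
  have key: "inner ?X \<xi> \<le> \<theta> * (M * (norm \<xi>)\<^sup>2 * norm ?X)" if th: "\<theta> > 0" for \<theta>
  proof -
    have tt: "\<theta> *\<^sub>R \<xi> \<in> tangent_space a" by (rule tangent_scale[OF tan])
    define z where "z = R a (\<theta> *\<^sub>R \<xi>)"
    have z: "z \<in> stiefel" using retr a tt by (simp add: is_retraction_def z_def)
    define e where "e = z - (a + \<theta> *\<^sub>R \<xi>)"
    have ne: "norm e \<le> M * \<theta>^2 * (norm \<xi>)\<^sup>2"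
      using Mb[rule_format, OF a tt] by (simp add: e_def z_def power_mult_distrib mult_ac)
    have "(\<Sum>i\<in>UNIV. (norm (a - x i))\<^sup>2) \<le> (\<Sum>i\<in>UNIV. (norm (z - x i))\<^sup>2)"
      using iam z by (simp add: is_IAM_def)
    moreover have "\<And>y. y \<in> stiefel \<Longrightarrow> (\<Sum>i\<in>UNIV. (norm (y - x i))\<^sup>2)
        = (\<Sum>i\<in>(UNIV::'n set). 2 * real CARD('r)) - 2 * inner y ?X"
      by (simp add: stiefel_dist xs inner_sum_right sum_subtractf sum_distrib_left)
    ultimately have "inner z ?X \<le> inner a ?X" using a z by simp
    moreover have "inner z ?X = inner a ?X + \<theta> * inner ?X \<xi> + inner e ?X"
      by (simp add: e_def inner_diff_left inner_add_left) (simp add: inner_commute)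
    moreover have "inner e ?X \<ge> - (M * \<theta>^2 * (norm \<xi>)\<^sup>2 * norm ?X)"
    proof -
      have "\<bar>inner e ?X\<bar> \<le> norm e * norm ?X" by (rule Cauchy_Schwarz_ineq2)
      also have "\<dots> \<le> M * \<theta>^2 * (norm \<xi>)\<^sup>2 * norm ?X" by (rule mult_right_mono[OF ne]) simp
      finally show ?thesis by linarith
    qed
    ultimately have "\<theta> * inner ?X \<xi> \<le> \<theta> * (\<theta> * (M * (norm \<xi>)\<^sup>2 * norm ?X))"
      by (simp add: power2_eq_square algebra_simps)
    thus ?thesis using th by simp
  qed
  show ?thesis by (rule le_eps_zero) (rule key)
qed

lemma iam_polar:
  fixes x :: "'n::finite \<Rightarrow> real^'r^'d" and R :: "real^'r^'d \<Rightarrow> real^'r^'d \<Rightarrow> real^'r^'d" and a :: "real^'r^'d"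
  assumes iam: "is_IAM x a" and retr: "is_retraction R"
    and Mb: "\<forall>x\<in>stiefel. \<forall>\<xi>\<in>tangent_space x. norm (R x \<xi> - (x + \<xi>)) \<le> M * (norm \<xi>)\<^sup>2"
    and xs: "\<forall>i. x i \<in> stiefel"
  defines "A \<equiv> (1 / real CARD('n)) *\<^sub>R (\<Sum>i\<in>UNIV. x i)"
  shows "A = a ** (transpose a ** A)" "transpose (transpose a ** A) = transpose a ** A"
proof -
  have a: "a \<in> stiefel" using iam by (simp add: is_IAM_def)
  have fo: "inner A \<xi> = 0" if "\<xi> \<in> tangent_space a" for \<xi>
  proof -
    have "inner (\<Sum>i\<in>UNIV. x i) \<xi> \<le> 0" by (rule iam_first_order[OF iam retr Mb xs that])
    moreover have "inner (\<Sum>i\<in>UNIV. x i) (-\<xi>) \<le> 0"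
      by (rule iam_first_order[OF iam retr Mb xs]) (use tangent_scale[OF that, of "-1"] in simp)
    ultimately show ?thesis by (simp add: A_def)
  qed
  let ?K = "(1/2) *\<^sub>R (transpose a ** A + transpose A ** a)"
  have K: "transpose ?K = ?K" by (simp add: transpose_scalar transpose_add matrix_transpose_mul add.commute)
  have pt: "proj_tangent a A \<in> tangent_space a" by (rule proj_tangent_in[OF a])
  have o: "inner (proj_tangent a A) (a ** ?K) = 0" by (rule tangent_inner_sym[OF pt K])
  have "0 = inner A (proj_tangent a A)" using fo[OF pt] by simp
  also have "\<dots> = inner (proj_tangent a A + a ** ?K) (proj_tangent a A)"
    using proj_decomp[of A a] by simp
  also have "\<dots> = inner (proj_tangent a A) (proj_tangent a A)"
    using o by (simp add: inner_add_left inner_commute) (simp add: inner_add_right)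
  finally have "proj_tangent a A = 0" by simp
  then have AK: "A = a ** ?K" using proj_decomp[of A a] by simp
  have aa: "transpose a ** a = mat 1" using a by (simp add: stiefel_def)
  have "transpose a ** A = ?K" by (subst AK) (simp add: matrix_mul_assoc aa)
  then show "A = a ** (transpose a ** A)" "transpose (transpose a ** A) = transpose a ** A"
    using AK K by simp_all
qed

lemma mv_inner_transpose: fixes A :: "real^'m^'n"
  shows "inner (A *v u) y = inner u (transpose A *v y)"
  by (simp add: inner_vec_def matrix_vector_mult_def transpose_def sum_distrib_left
      sum_distrib_right mult_ac) (rule sum.swap)

lemma discr: fixes a b c :: real
  assumes c: "c \<ge> 0" and q: "\<And>t. 0 \<le> a + 2*b*t + c*t\<^sup>2"
  shows "b\<^sup>2 \<le> a*c"
proof (cases "c = 0")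
  case True
  have "b = 0"
  proof (rule ccontr)
    assume b: "b \<noteq> 0"
    have "0 \<le> a + 2*b*(-(a+1)/(2*b)) + c*(-(a+1)/(2*b))\<^sup>2" by (rule q)
    also have "\<dots> = -1" using b True by (simp add: field_simps)
    finally show False by simp
  qed
  then show ?thesis using True by simp
next
  case False
  then have cp: "c > 0" using c by simp
  have "0 \<le> a + 2*b*(-b/c) + c*(-b/c)\<^sup>2" by (rule q)
  also have "\<dots> = a - b\<^sup>2/c" using cp by (simp add: field_simps power2_eq_square)
  finally have "b\<^sup>2/c \<le> a" by simp
  then show ?thesis using cp by (simp add: field_simps)
qed

lemma sym_form: fixes P :: "real^'n^'n"
  assumes "transpose P = P" shows "inner u (P *v v) = inner v (P *v u)"
  by (metis assms inner_commute mv_inner_transpose)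

lemma psd_cs: fixes P :: "real^'n^'n"
  assumes sym: "transpose P = P" and psd: "\<And>v. 0 \<le> inner v (P *v v)"
  shows "(inner u (P *v v))\<^sup>2 \<le> inner u (P *v u) * inner v (P *v v)"
proof (rule discr[OF psd])
  fix t :: real
  have "0 \<le> inner (u + t *\<^sub>R v) (P *v (u + t *\<^sub>R v))" by (rule psd)
  also have "\<dots> = inner u (P *v u) + 2 * inner u (P *v v) * t + inner v (P *v v) * t\<^sup>2"
    using sym_form[OF sym, of v u]
    by (simp add: matrix_vector_right_distrib matrix_vector_mult_scaleR inner_add_left
        inner_add_right power2_eq_square algebra_simps)
  finally show "0 \<le> inner u (P *v u) + 2 * inner u (P *v v) * t + inner v (P *v v) * t\<^sup>2" .
qed

lemma diag_form: fixes P :: "real^'n^'n"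
  shows "inner (axis j 1) (P *v axis j 1) = P$j$j"
  by (simp add: inner_axis' matrix_vector_mult_basis column_def)

lemma comp_form: fixes P :: "real^'n^'n"
  shows "inner (axis j 1) w = w$j"
  by (simp add: inner_axis')

lemma psd_trace: fixes P :: "real^'n^'n"
  assumes sym: "transpose P = P" and psd: "\<And>v. 0 \<le> inner v (P *v v)"
  shows "inner v (P *v v) \<le> (\<Sum>j\<in>UNIV. P$j$j) * (norm v)\<^sup>2"
proof -
  let ?q = "inner v (P *v v)"
  let ?w = "P *v v"
  have q0: "?q \<ge> 0" by (rule psd)
  have tr0: "(\<Sum>j\<in>UNIV. P$j$j) \<ge> 0"
    by (rule sum_nonneg) (metis diag_form psd)
  have "(norm ?w)\<^sup>2 = (\<Sum>j\<in>UNIV. (?w$j)\<^sup>2)"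
    unfolding power2_norm_eq_inner by (simp add: inner_vec_def power2_eq_square)
  also have "\<dots> \<le> (\<Sum>j\<in>UNIV. P$j$j * ?q)"
  proof (rule sum_mono)
    fix j
    have "(?w$j)\<^sup>2 = (inner (axis j 1) (P *v v))\<^sup>2" by (simp add: inner_axis')
    also have "\<dots> \<le> inner (axis j 1) (P *v axis j 1) * ?q" by (rule psd_cs[OF sym psd])
    finally show "(?w$j)\<^sup>2 \<le> P$j$j * ?q" by (simp add: diag_form)
  qed
  finally have w: "(norm ?w)\<^sup>2 \<le> (\<Sum>j\<in>UNIV. P$j$j) * ?q" by (simp add: sum_distrib_right)
  have "?q\<^sup>2 \<le> (norm v * norm ?w)\<^sup>2"
    using Cauchy_Schwarz_ineq2[of v ?w] q0 by (simp add: power_mono)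
  also have "\<dots> = (norm v)\<^sup>2 * (norm ?w)\<^sup>2" by (simp add: power_mult_distrib)
  also have "\<dots> \<le> (norm v)\<^sup>2 * ((\<Sum>j\<in>UNIV. P$j$j) * ?q)" by (rule mult_left_mono[OF w]) simp
  finally have "?q * ?q \<le> ((norm v)\<^sup>2 * (\<Sum>j\<in>UNIV. P$j$j)) * ?q" by (simp add: power2_eq_square mult_ac)
  then show ?thesis
  proof (cases "?q = 0")
    case True then show ?thesis using tr0 by simp
  next
    case False then have "?q > 0" using q0 by simp
    then show ?thesis using \<open>?q * ?q \<le> _\<close> by (simp add: mult_ac)
  qed
qed

lemma sum3_rot: "(\<Sum>i\<in>A. \<Sum>j\<in>B. \<Sum>k\<in>C. f i j k) = (\<Sum>k\<in>C. \<Sum>i\<in>A. \<Sum>j\<in>B. f i j k)"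
proof -
  have "(\<Sum>i\<in>A. \<Sum>j\<in>B. \<Sum>k\<in>C. f i j k) = (\<Sum>i\<in>A. \<Sum>k\<in>C. \<Sum>j\<in>B. f i j k)"
    by (intro sum.cong refl) (rule sum.swap)
  also have "\<dots> = (\<Sum>k\<in>C. \<Sum>i\<in>A. \<Sum>j\<in>B. f i j k)" by (rule sum.swap)
  finally show ?thesis .
qed

lemma inner_PYY: fixes P :: "real^'r^'r" and Y :: "real^'r^'d"
  shows "inner P (transpose Y ** Y) = (\<Sum>k\<in>UNIV. inner (Y$k) (P *v (Y$k)))"
  apply (simp add: inner_vec_def matrix_matrix_mult_def matrix_vector_mult_def transpose_def
      sum_distrib_left sum_distrib_right mult_ac)
  by (rule sum3_rot)

lemma norm_sq_rows: fixes Y :: "real^'r^'d"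
  shows "(norm Y)\<^sup>2 = (\<Sum>k\<in>UNIV. (norm (Y$k))\<^sup>2)"
  unfolding power2_norm_eq_inner by (simp add: inner_vec_def)

lemma stiefel_mv: fixes x :: "real^'r^'d"
  assumes "x \<in> stiefel" shows "norm (x *v v) = norm v"
proof -
  have "inner (x *v v) (x *v v) = inner v v"
    using assms by (simp add: mv_inner_transpose matrix_vector_mul_assoc stiefel_def)
  thus ?thesis by (simp add: norm_eq_sqrt_inner)
qed

lemma mat_mv_sum: fixes X :: "'i \<Rightarrow> real^'r^'d"
  shows "(sum X I) *v v = (\<Sum>i\<in>I. X i *v v)"
  by (induction I rule: infinite_finite_induct) (auto simp: matrix_vector_mult_add_rdistrib)

lemma half_lemma: fixes a b :: "real^'r^'d" and S :: "real^'r^'r"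
  assumes a: "a \<in> stiefel" and b: "b \<in> stiefel" and S: "transpose S = S"
  shows "inner (a ** S) (a - b) = (1/2) * inner S (transpose (a - b) ** (a - b))"
proof -
  have aa: "transpose a ** a = mat 1" using a by (simp add: stiefel_def)
  have bb: "transpose b ** b = mat 1" using b by (simp add: stiefel_def)
  have 1: "inner (a ** S) (a - b) = inner S (mat 1) - inner S (transpose a ** b)"
    by (simp add: inner_mat_mult_left mat_diff_right aa inner_diff_right)
  have t: "inner S (transpose b ** a) = inner S (transpose a ** b)"
    by (metis S inner_transpose matrix_transpose_mul transpose_transpose)
  have e: "transpose (a - b) ** (a - b) = (mat 1 + mat 1) - transpose a ** b - transpose b ** a"
    by (simp add: transpose_diff mat_diff_left mat_diff_right aa bb algebra_simps)
  have "inner S (transpose (a - b) ** (a - b)) = 2 * inner S (mat 1) - 2 * inner S (transpose a ** b)"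
    unfolding e by (simp only: inner_diff_right inner_add_right t)
  then show ?thesis using 1 by simp
qed

lemma lipschitz_core:
  fixes a b :: "real^'r^'d" and S T :: "real^'r^'r"
  assumes a: "a \<in> stiefel" and b: "b \<in> stiefel" and S: "transpose S = S" and T: "transpose T = T"
    and Sl: "\<And>Y::real^'r^'d. inner S (transpose Y ** Y) \<ge> s * (norm Y)\<^sup>2"
    and Tl: "\<And>Y::real^'r^'d. inner T (transpose Y ** Y) \<ge> s' * (norm Y)\<^sup>2"
  shows "inner (a ** S - b ** T) (a - b) \<ge> (s + s')/2 * (norm (a - b))\<^sup>2"
proof -
  have 1: "inner (a ** S) (a - b) \<ge> s/2 * (norm (a - b))\<^sup>2"
    using half_lemma[OF a b S] Sl[of "a - b"] by simp
  have 2: "inner (b ** T) (b - a) \<ge> s'/2 * (norm (a - b))\<^sup>2"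
    using half_lemma[OF b a T] Tl[of "b - a"] by (simp add: norm_minus_commute)
  have "inner (a ** S - b ** T) (a - b) = inner (a ** S) (a - b) + inner (b ** T) (b - a)"
    by (simp add: inner_diff_left inner_diff_right)
  then show ?thesis using 1 2 by (simp add: field_simps)
qed

lemma lower_bound:
  fixes x :: "'n::finite \<Rightarrow> real^'r^'d" and a A :: "real^'r^'d" and S :: "real^'r^'r"
  assumes a: "a \<in> stiefel" and xs: "\<forall>i. x i \<in> stiefel"
    and Adef: "A = (1 / real CARD('n)) *\<^sub>R (\<Sum>i\<in>UNIV. x i)"
    and AS: "A = a ** S" and S: "transpose S = S"
  shows "inner S (transpose Y ** Y) \<ge>
           (1 - (\<Sum>i\<in>UNIV. (norm (x i - a))\<^sup>2) / (2 * real CARD('n))) * (norm Y)\<^sup>2"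
proof -
  let ?n = "real CARD('n)"
  have n0: "?n > 0" by simp
  have Av: "norm (A *v v) \<le> norm v" for v
  proof -
    have "A *v v = (1 / ?n) *\<^sub>R (\<Sum>i\<in>UNIV. x i *v v)"
      by (simp add: Adef mat_mv_sum flip: scaleR_matrix_vector_assoc)
    then have "norm (A *v v) = (1 / ?n) * norm (\<Sum>i\<in>UNIV. x i *v v)" by simp
    also have "\<dots> \<le> (1 / ?n) * (\<Sum>i\<in>UNIV. norm (x i *v v))"
      by (rule mult_left_mono[OF norm_sum]) simp
    also have "\<dots> = norm v" using xs by (simp add: stiefel_mv)
    finally show ?thesis .
  qed
  have Sv: "norm (S *v v) \<le> norm v" for v
  proof -
    have "norm (S *v v) = norm (a *v (S *v v))" using stiefel_mv[OF a] by simp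
    also have "\<dots> = norm (A *v v)" by (simp add: AS matrix_vector_mul_assoc)
    finally show ?thesis using Av by simp
  qed
  define P where "P = mat 1 - S"
  have Psym: "transpose P = P" using S by (simp add: P_def transpose_diff)
  have Ppsd: "0 \<le> inner v (P *v v)" for v
  proof -
    have "inner v (S *v v) \<le> norm v * norm (S *v v)" by (rule norm_cauchy_schwarz)
    also have "\<dots> \<le> norm v * norm v" by (rule mult_left_mono[OF Sv]) simp
    finally show ?thesis by (simp add: P_def matrix_vector_mult_diff_rdistrib inner_diff_right
        flip: power2_eq_square power2_norm_eq_inner)
  qed
  have trS: "(\<Sum>j\<in>UNIV. S$j$j) = inner A a"
  proof -
    have "(\<Sum>j\<in>UNIV. S$j$j) = inner (mat 1) S" by (simp add: inner_mat1_gen)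
    also have "\<dots> = inner S (transpose a ** a)" using a by (simp add: stiefel_def inner_commute)
    also have "\<dots> = inner A a" by (simp add: AS inner_mat_mult_left)
    finally show ?thesis .
  qed
  have D: "(\<Sum>i\<in>UNIV. (norm (x i - a))\<^sup>2) = 2 * ?n * real CARD('r) - 2 * ?n * inner A a"
  proof -
    have "(\<Sum>i\<in>UNIV. (norm (x i - a))\<^sup>2) = (\<Sum>i\<in>UNIV. 2 * real CARD('r) - 2 * inner (x i) a)"
      using xs a by (simp add: stiefel_dist)
    also have "\<dots> = 2 * ?n * real CARD('r) - 2 * ?n * inner A a"
      by (simp add: sum_subtractf Adef inner_sum_left sum_distrib_left)
    finally show ?thesis .
  qed
  have trP: "(\<Sum>j\<in>UNIV. P$j$j) = (\<Sum>i\<in>UNIV. (norm (x i - a))\<^sup>2) / (2 * ?n)"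
    using trS D n0 by (simp add: P_def sum_subtractf mat_def field_simps)
  have "inner P (transpose Y ** Y) \<le> (\<Sum>j\<in>UNIV. P$j$j) * (norm Y)\<^sup>2"
  proof -
    have "inner P (transpose Y ** Y) = (\<Sum>k\<in>UNIV. inner (Y$k) (P *v (Y$k)))" by (rule inner_PYY)
    also have "\<dots> \<le> (\<Sum>k\<in>UNIV. (\<Sum>j\<in>UNIV. P$j$j) * (norm (Y$k))\<^sup>2)"
      by (rule sum_mono) (rule psd_trace[OF Psym Ppsd])
    also have "\<dots> = (\<Sum>j\<in>UNIV. P$j$j) * (norm Y)\<^sup>2" by (simp add: norm_sq_rows sum_distrib_left)
    finally show ?thesis .
  qed
  moreover have "inner S (transpose Y ** Y) = (norm Y)\<^sup>2 - inner P (transpose Y ** Y)"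
    by (simp add: P_def inner_diff_left inner_mat1)
  ultimately show ?thesis using trP by (simp add: algebra_simps)
qed

lemma mat_mv: fixes v :: "real^'n" shows "mat m *v v = m *\<^sub>R v"
proof -
  have "\<And>i j. (if i = j then m else 0) * v $ j = (if j = i then m * v $ i else 0)" by simp
  then show ?thesis by (simp add: vec_eq_iff mat_def matrix_vector_mult_def sum.delta cong del: if_cong)
qed

lemma eig_finite: fixes T :: "real^'n^'n"
  assumes sym: "transpose T = T"
  shows "finite {c. \<exists>v. v \<noteq> 0 \<and> T *v v = c *\<^sub>R v}"
proof -
  define E where "E = {c. \<exists>v. v \<noteq> 0 \<and> T *v v = c *\<^sub>R v}"
  define ev where "ev c = (SOME v. v \<noteq> 0 \<and> T *v v = c *\<^sub>R v)" for c
  have ev: "ev c \<noteq> 0 \<and> T *v ev c = c *\<^sub>R ev c" if "c \<in> E" for c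
  proof -
    have "\<exists>v. v \<noteq> 0 \<and> T *v v = c *\<^sub>R v" using that by (simp add: E_def)
    then show ?thesis unfolding ev_def by (rule someI_ex)
  qed
  have inj: "inj_on ev E"
  proof (rule inj_onI)
    fix c c' assume c: "c \<in> E" and c': "c' \<in> E" and eq: "ev c = ev c'"
    have 1: "T *v ev c = c *\<^sub>R ev c" using ev[OF c] by blast
    have 2: "T *v ev c = c' *\<^sub>R ev c" using ev[OF c'] unfolding eq by blast
    have "c *\<^sub>R ev c = c' *\<^sub>R ev c" using 1 2 by (metis)
    moreover have "ev c \<noteq> 0" using ev[OF c] by blast
    ultimately show "c = c'" by simp
  qed
  have po: "pairwise orthogonal (ev ` E)"
    unfolding pairwise_def
  proof (intro ballI impI)
    fix p q assume p: "p \<in> ev ` E" and q: "q \<in> ev ` E" and ne: "p \<noteq> q"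
    obtain c where c: "c \<in> E" and pc: "p = ev c" using p by blast
    obtain c' where c': "c' \<in> E" and qc: "q = ev c'" using q by blast
    have cc: "c \<noteq> c'" using ne pc qc by blast
    have "c * inner (ev c) (ev c') = inner (T *v ev c) (ev c')" using ev[OF c] by simp
    also have "\<dots> = inner (ev c) (T *v ev c')" by (simp add: mv_inner_transpose sym)
    also have "\<dots> = c' * inner (ev c) (ev c')" using ev[OF c'] by simp
    finally have "(c - c') * inner (ev c) (ev c') = 0" by (simp add: algebra_simps)
    then show "orthogonal p q" using cc pc qc by (simp add: orthogonal_def)
  qed
  have "0 \<notin> ev ` E"
  proof
    assume "0 \<in> ev ` E"
    then obtain c where "c \<in> E" "ev c = 0" by (metis imageE)
    then show False using ev by blast
  qed
  then have "independent (ev ` E)" using po by (simp add: pairwise_orthogonal_independent)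
  then have "finite (ev ` E)" using independent_bound by blast
  then have "finite E" using inj by (rule finite_imageD)
  then show ?thesis unfolding E_def .
qed

lemma rayleigh: fixes T :: "real^'n^'n"
  assumes sym: "transpose T = T"
  shows "inner v (T *v v) \<ge> min_eigenvalue T * (norm v)\<^sup>2"
proof -
  let ?f = "\<lambda>v::real^'n. inner v (T *v v)"
  have c1: "compact (sphere (0::real^'n) 1)" by simp
  have c2: "sphere (0::real^'n) 1 \<noteq> {}"
  proof -
    obtain i :: 'n where True by simp
    have "axis i (1::real) \<in> sphere 0 1" by simp
    thus ?thesis by blast
  qed
  have c3: "continuous_on (sphere 0 1) ?f" by (intro continuous_intros)
  obtain u where u: "u \<in> sphere 0 1" and umin0: "\<forall>y\<in>sphere 0 1. ?f u \<le> ?f y"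
    using continuous_attains_inf[OF c1 c2 c3] by blast
  have umin: "?f u \<le> ?f y" if "y \<in> sphere 0 1" for y using umin0 that by blast
  define m where "m = ?f u"
  have nu: "norm u = 1" using u by simp
  have fm: "?f y \<ge> m * (norm y)\<^sup>2" for y
  proof (cases "y = 0")
    case True then show ?thesis by simp
  next
    case False
    then have ny: "norm y > 0" by simp
    have "y /\<^sub>R norm y \<in> sphere 0 1" using ny by simp
    then have "m \<le> ?f (y /\<^sub>R norm y)" unfolding m_def by (rule umin)
    also have "\<dots> = ?f y / (norm y)\<^sup>2"
      by (simp add: matrix_vector_mult_scaleR power2_eq_square divide_inverse mult_ac)
    finally show ?thesis using ny by (simp add: field_simps)
  qed
  define P where "P = T - mat m"
  have Pv: "P *v y = T *v y - m *\<^sub>R y" for y by (simp add: P_def matrix_vector_mult_diff_rdistrib mat_mv)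
  have Psym: "transpose P = P" by (simp add: P_def transpose_diff sym)
  have Ppsd: "0 \<le> inner y (P *v y)" for y
    using fm[of y] by (simp add: Pv inner_diff_right power2_norm_eq_inner)
  have Pu0: "inner u (P *v u) = 0" using nu by (simp add: Pv inner_diff_right m_def power2_norm_eq_inner[symmetric])
  have "(inner (P *v u) (P *v u))\<^sup>2 \<le> inner (P *v u) (P *v (P *v u)) * inner u (P *v u)"
    by (rule psd_cs[OF Psym Ppsd])
  then have "P *v u = 0" using Pu0 by simp
  then have "T *v u = m *\<^sub>R u" by (simp add: Pv)
  moreover have "u \<noteq> 0" using nu by auto
  ultimately have "\<exists>v. v \<noteq> 0 \<and> T *v v = m *\<^sub>R v" by blast
  then have "m \<in> {c. \<exists>v. v \<noteq> 0 \<and> T *v v = c *\<^sub>R v}" by (rule CollectI)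
  then have "min_eigenvalue T \<le> m" unfolding min_eigenvalue_def by (rule Min_le[OF eig_finite[OF sym]])
  then have "min_eigenvalue T * (norm v)\<^sup>2 \<le> m * (norm v)\<^sup>2" by (rule mult_right_mono) simp
  then show ?thesis using fm[of v] by simp
qed

definition Qf :: "real^'n^'n \<Rightarrow> ('n::finite \<Rightarrow> real^'r^'d) \<Rightarrow> ('n \<Rightarrow> real^'r^'d) \<Rightarrow> real" where
  "Qf T u v = (\<Sum>i\<in>UNIV. inner (u i) (v i)) - (\<Sum>i\<in>UNIV. \<Sum>j\<in>UNIV. T$i$j * inner (u i) (v j))"

definition By :: "real^'n^'n \<Rightarrow> ('n::finite \<Rightarrow> real^'r^'d) \<Rightarrow> 'n \<Rightarrow> real^'r^'d" where
  "By T z i = z i - (\<Sum>j\<in>UNIV. T$i$j *\<^sub>R z j)"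

lemma sum4_swap: "(\<Sum>i\<in>A. \<Sum>j\<in>B. \<Sum>k\<in>C. \<Sum>l\<in>D. f i j k l) = (\<Sum>k\<in>C. \<Sum>l\<in>D. \<Sum>i\<in>A. \<Sum>j\<in>B. f i j k l)"
proof -
  have "(\<Sum>i\<in>A. \<Sum>j\<in>B. \<Sum>k\<in>C. \<Sum>l\<in>D. f i j k l) = (\<Sum>i\<in>A. \<Sum>k\<in>C. \<Sum>j\<in>B. \<Sum>l\<in>D. f i j k l)"
    by (intro sum.cong refl) (rule sum.swap)
  also have "\<dots> = (\<Sum>k\<in>C. \<Sum>i\<in>A. \<Sum>j\<in>B. \<Sum>l\<in>D. f i j k l)" by (rule sum.swap)
  also have "\<dots> = (\<Sum>k\<in>C. \<Sum>i\<in>A. \<Sum>l\<in>D. \<Sum>j\<in>B. f i j k l)"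
    by (intro sum.cong refl) (rule sum.swap)
  also have "\<dots> = (\<Sum>k\<in>C. \<Sum>l\<in>D. \<Sum>i\<in>A. \<Sum>j\<in>B. f i j k l)"
    by (intro sum.cong refl) (rule sum.swap)
  finally show ?thesis .
qed

context
  fixes T :: "real^'n::finite^'n"
  assumes Tsym: "transpose T = T" and Trow: "\<forall>i. (\<Sum>j\<in>UNIV. T$i$j) = 1"
    and Tnn: "\<forall>i j. T$i$j \<ge> 0"
begin

lemma Tij: "T$i$j = T$j$i"
  using Tsym by (metis transpose_def vec_lambda_beta)

lemma Tcol: "(\<Sum>i\<in>UNIV. T$i$j) = 1"
proof -
  have "(\<Sum>i\<in>UNIV. T$i$j) = (\<Sum>i\<in>UNIV. T$j$i)" by (intro sum.cong refl) (rule Tij)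
  then show ?thesis using Trow by simp
qed

lemma Qf_self: fixes v :: "'n \<Rightarrow> real^'r^'d"
  shows "Qf T v v = (1/2) * (\<Sum>i\<in>UNIV. \<Sum>j\<in>UNIV. T$i$j * (norm (v i - v j))\<^sup>2)"
proof -
  have e: "(norm (v i - v j))\<^sup>2 = (norm (v i))\<^sup>2 - 2 * inner (v i) (v j) + (norm (v j))\<^sup>2" for i j
    by (simp add: power2_norm_eq_inner inner_diff_left inner_diff_right inner_commute)
  have s1: "(\<Sum>i\<in>UNIV. \<Sum>j\<in>UNIV. T$i$j * (norm (v i))\<^sup>2) = (\<Sum>i\<in>UNIV. (norm (v i))\<^sup>2)"
    by (simp add: sum_distrib_right[symmetric] Trow)
  have s2: "(\<Sum>i\<in>UNIV. \<Sum>j\<in>UNIV. T$i$j * (norm (v j))\<^sup>2) = (\<Sum>j\<in>UNIV. (norm (v j))\<^sup>2)"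
    by (subst sum.swap) (simp add: sum_distrib_right[symmetric] Tcol)
  have "(\<Sum>i\<in>UNIV. \<Sum>j\<in>UNIV. T$i$j * (norm (v i - v j))\<^sup>2)
     = (\<Sum>i\<in>UNIV. \<Sum>j\<in>UNIV. T$i$j * (norm (v i))\<^sup>2) - 2 * (\<Sum>i\<in>UNIV. \<Sum>j\<in>UNIV. T$i$j * inner (v i) (v j))
       + (\<Sum>i\<in>UNIV. \<Sum>j\<in>UNIV. T$i$j * (norm (v j))\<^sup>2)"
    by (simp add: e algebra_simps sum.distrib sum_subtractf sum_distrib_left)
  then show ?thesis using s1 s2 by (simp add: Qf_def power2_norm_eq_inner)
qed

lemma Qf_nonneg: "Qf T v v \<ge> 0"
  unfolding Qf_self using Tnn by (simp add: sum_nonneg)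

lemma Qf_upper: fixes v :: "'n \<Rightarrow> real^'r^'d"
  shows "Qf T v v \<le> (1 - min_eigenvalue T) * (\<Sum>i\<in>UNIV. (norm (v i))\<^sup>2)"
proof -
  define w where "w k l = (\<chi> i. v i $ k $ l)" for k l
  have 1: "(\<Sum>i\<in>UNIV. \<Sum>j\<in>UNIV. T$i$j * inner (v i) (v j))
      = (\<Sum>k\<in>UNIV. \<Sum>l\<in>UNIV. inner (w k l) (T *v w k l))"
  proof -
    have "(\<Sum>i\<in>UNIV. \<Sum>j\<in>UNIV. T$i$j * inner (v i) (v j))
        = (\<Sum>i\<in>UNIV. \<Sum>j\<in>UNIV. \<Sum>k\<in>UNIV. \<Sum>l\<in>UNIV. v i $ k $ l * (T$i$j * v j $ k $ l))"
      by (simp add: inner_vec_def sum_distrib_left mult_ac)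
    also have "\<dots> = (\<Sum>k\<in>UNIV. \<Sum>l\<in>UNIV. \<Sum>i\<in>UNIV. \<Sum>j\<in>UNIV. v i $ k $ l * (T$i$j * v j $ k $ l))"
      by (rule sum4_swap)
    also have "\<dots> = (\<Sum>k\<in>UNIV. \<Sum>l\<in>UNIV. inner (w k l) (T *v w k l))"
      by (simp add: w_def inner_vec_def matrix_vector_mult_def sum_distrib_left)
    finally show ?thesis .
  qed
  have 2: "(\<Sum>i\<in>UNIV. (norm (v i))\<^sup>2) = (\<Sum>k\<in>UNIV. \<Sum>l\<in>UNIV. (norm (w k l))\<^sup>2)"
  proof -
    have "(\<Sum>i\<in>UNIV. (norm (v i))\<^sup>2) = (\<Sum>i\<in>UNIV. \<Sum>k\<in>UNIV. \<Sum>l\<in>UNIV. v i $ k $ l * v i $ k $ l)"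
      by (simp add: power2_norm_eq_inner inner_vec_def)
    also have "\<dots> = (\<Sum>k\<in>UNIV. \<Sum>l\<in>UNIV. \<Sum>i\<in>UNIV. v i $ k $ l * v i $ k $ l)"
      by (rule sum3_rot[symmetric])
    also have "\<dots> = (\<Sum>k\<in>UNIV. \<Sum>l\<in>UNIV. (norm (w k l))\<^sup>2)"
      by (simp add: power2_norm_eq_inner inner_vec_def w_def)
    finally show ?thesis .
  qed
  have 3: "(\<Sum>k\<in>UNIV. \<Sum>l\<in>UNIV. inner (w k l) (T *v w k l)) \<ge>
      (\<Sum>k\<in>UNIV. \<Sum>l\<in>UNIV. min_eigenvalue T * (norm (w k l))\<^sup>2)"
    by (intro sum_mono rayleigh[OF Tsym])
  have 4: "(\<Sum>k\<in>UNIV. \<Sum>l\<in>UNIV. min_eigenvalue T * (norm (w k l))\<^sup>2)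
     = min_eigenvalue T * (\<Sum>i\<in>UNIV. (norm (v i))\<^sup>2)" by (simp add: 2 sum_distrib_left)
  have 5: "Qf T v v = (\<Sum>i\<in>UNIV. (norm (v i))\<^sup>2) - (\<Sum>i\<in>UNIV. \<Sum>j\<in>UNIV. T$i$j * inner (v i) (v j))"
    by (simp add: Qf_def power2_norm_eq_inner)
  show ?thesis using 1 3 4 5 by (simp add: algebra_simps)
qed

lemma Qf_sym: "Qf T u v = Qf T v u"
proof -
  have "(\<Sum>i\<in>UNIV. \<Sum>j\<in>UNIV. T$i$j * inner (u i) (v j)) = (\<Sum>j\<in>UNIV. \<Sum>i\<in>UNIV. T$i$j * inner (u i) (v j))"
    by (rule sum.swap)
  also have "\<dots> = (\<Sum>j\<in>UNIV. \<Sum>i\<in>UNIV. T$j$i * inner (v j) (u i))"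
    by (intro sum.cong refl) (simp add: Tij[of _ "_"] inner_commute)
  finally show ?thesis by (simp add: Qf_def inner_commute)
qed

lemma Qf_add_left: "Qf T (\<lambda>i. u i + w i) v = Qf T u v + Qf T w v"
  by (simp add: Qf_def inner_add_left sum.distrib algebra_simps)

lemma Qf_scale_left: "Qf T (\<lambda>i. c *\<^sub>R u i) v = c * Qf T u v"
  by (simp add: Qf_def sum_distrib_left algebra_simps)

lemma Qf_expand: "Qf T (\<lambda>i. u i + t *\<^sub>R v i) (\<lambda>i. u i + t *\<^sub>R v i)
   = Qf T u u + 2 * Qf T u v * t + Qf T v v * t\<^sup>2"
proof -
  have "Qf T (\<lambda>i. u i + t *\<^sub>R v i) (\<lambda>i. u i + t *\<^sub>R v i)
      = Qf T u (\<lambda>i. u i + t *\<^sub>R v i) + t * Qf T v (\<lambda>i. u i + t *\<^sub>R v i)"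
    by (simp add: Qf_add_left Qf_scale_left)
  also have "Qf T u (\<lambda>i. u i + t *\<^sub>R v i) = Qf T u u + t * Qf T u v"
    by (subst Qf_sym) (simp add: Qf_add_left Qf_scale_left Qf_sym[of v u])
  also have "Qf T v (\<lambda>i. u i + t *\<^sub>R v i) = Qf T u v + t * Qf T v v"
    by (subst Qf_sym) (simp add: Qf_add_left Qf_scale_left)
  finally show ?thesis by (simp add: power2_eq_square algebra_simps)
qed

lemma Qf_cs: "(Qf T u v)\<^sup>2 \<le> Qf T u u * Qf T v v"
proof (rule discr[OF Qf_nonneg])
  fix t :: real
  show "0 \<le> Qf T u u + 2 * Qf T u v * t + Qf T v v * t\<^sup>2"
    using Qf_nonneg[of "\<lambda>i. u i + t *\<^sub>R v i"] by (simp add: Qf_expand)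
qed

lemma Qf_By: "Qf T z (By T z) = (\<Sum>i\<in>UNIV. (norm (By T z i))\<^sup>2)"
proof -
  let ?w = "By T z"
  have "(\<Sum>i\<in>UNIV. \<Sum>j\<in>UNIV. T$i$j * inner (z i) (?w j)) = (\<Sum>j\<in>UNIV. \<Sum>i\<in>UNIV. T$i$j * inner (z i) (?w j))"
    by (rule sum.swap)
  also have "\<dots> = (\<Sum>j\<in>UNIV. inner (\<Sum>i\<in>UNIV. T$j$i *\<^sub>R z i) (?w j))"
    by (intro sum.cong refl) (simp add: inner_sum_left Tij[of _ "_"])
  finally have 1: "(\<Sum>i\<in>UNIV. \<Sum>j\<in>UNIV. T$i$j * inner (z i) (?w j)) = (\<Sum>j\<in>UNIV. inner (\<Sum>i\<in>UNIV. T$j$i *\<^sub>R z i) (?w j))" .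
  have "Qf T z ?w = (\<Sum>j\<in>UNIV. inner (z j) (?w j)) - (\<Sum>j\<in>UNIV. inner (\<Sum>i\<in>UNIV. T$j$i *\<^sub>R z i) (?w j))"
    by (simp add: Qf_def 1)
  also have "\<dots> = (\<Sum>j\<in>UNIV. inner (?w j) (?w j))"
    by (simp add: sum_subtractf[symmetric] inner_diff_left[symmetric]) (simp add: By_def)
  finally show ?thesis by (simp add: power2_norm_eq_inner)
qed

lemma By_bound: "(\<Sum>i\<in>UNIV. (norm (By T z i))\<^sup>2) \<le> (1 - min_eigenvalue T)\<^sup>2 * (\<Sum>i\<in>UNIV. (norm (z i))\<^sup>2)"
proof -
  let ?w = "By T z"
  let ?L = "1 - min_eigenvalue T"
  let ?N = "\<Sum>i\<in>UNIV. (norm (By T z i))\<^sup>2"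
  let ?Z = "\<Sum>i\<in>UNIV. (norm (z i))\<^sup>2"
  have N0: "?N \<ge> 0" by (simp add: sum_nonneg)
  have zz: "0 \<le> Qf T z z" "Qf T z z \<le> ?L * ?Z" by (rule Qf_nonneg, rule Qf_upper)
  have ww: "0 \<le> Qf T ?w ?w" "Qf T ?w ?w \<le> ?L * ?N" by (rule Qf_nonneg, rule Qf_upper)
  have "?N\<^sup>2 \<le> Qf T z z * Qf T ?w ?w" using Qf_cs[of z ?w] by (simp add: Qf_By)
  also have "\<dots> \<le> (?L * ?Z) * (?L * ?N)" using zz ww by (intro mult_mono) auto
  finally have "?N * ?N \<le> (?L\<^sup>2 * ?Z) * ?N" by (simp add: power2_eq_square mult_ac)
  then show ?thesis
  proof (cases "?N = 0")
    case True then show ?thesis by (simp add: sum_nonneg)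
  next
    case False then have "?N > 0" using N0 by simp
    then show ?thesis using \<open>?N * ?N \<le> _\<close> by simp
  qed
qed

end

lemma frob_mult: fixes X :: "real^'m^'d" and Y :: "real^'r^'m"
  shows "norm (X ** Y) \<le> norm X * norm Y"
proof -
  have e: "(X ** Y)$i$k = inner (X$i) (transpose Y $ k)" for i k
    by (simp add: matrix_matrix_mult_def inner_vec_def transpose_def)
  have "(norm (X ** Y))\<^sup>2 = (\<Sum>i\<in>UNIV. \<Sum>k\<in>UNIV. (inner (X$i) (transpose Y $ k))\<^sup>2)"
    unfolding power2_norm_eq_inner by (simp add: inner_vec_def e power2_eq_square)
  also have "\<dots> \<le> (\<Sum>i\<in>UNIV. \<Sum>k\<in>UNIV. (norm (X$i))\<^sup>2 * (norm (transpose Y $ k))\<^sup>2)"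
  proof (intro sum_mono)
    fix i k
    have "\<bar>inner (X$i) (transpose Y $ k)\<bar> \<le> norm (X$i) * norm (transpose Y $ k)"
      by (rule Cauchy_Schwarz_ineq2)
    then have "(inner (X$i) (transpose Y $ k))\<^sup>2 \<le> (norm (X$i) * norm (transpose Y $ k))\<^sup>2"
      by (metis abs_ge_zero power2_abs power_mono)
    then show "(inner (X$i) (transpose Y $ k))\<^sup>2 \<le> (norm (X$i))\<^sup>2 * (norm (transpose Y $ k))\<^sup>2"
      by (simp add: power_mult_distrib)
  qed
  also have "\<dots> = (norm X)\<^sup>2 * (norm (transpose Y))\<^sup>2"
    apply (simp add: norm_sq_rows[of X] norm_sq_rows[of "transpose Y"] sum_distrib_left sum_distrib_right)
    by (rule sum.swap)
  also have "\<dots> = (norm X * norm Y)\<^sup>2" by (simp add: norm_transpose power_mult_distrib)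
  finally show ?thesis by (simp add: power2_le_iff_abs_le)
qed

lemma stiefel_sym_sq: fixes a b :: "real^'r^'d"
  assumes a: "a \<in> stiefel" and b: "b \<in> stiefel"
  shows "transpose a ** (a - b) + transpose (a - b) ** a = transpose (a - b) ** (a - b)"
proof -
  have aa: "transpose a ** a = mat 1" using a by (simp add: stiefel_def)
  have bb: "transpose b ** b = mat 1" using b by (simp add: stiefel_def)
  show ?thesis by (simp add: mat_diff_right mat_diff_left transpose_diff aa bb algebra_simps)
qed

lemma transpose_sum: "transpose (sum (f::'i \<Rightarrow> real^'r^'d) I) = (\<Sum>i\<in>I. transpose (f i))"
  by (induction I rule: infinite_finite_induct) (auto simp: transpose_add transpose_zero)

context
  fixes T :: "real^'n::finite^'n"
  assumes Tsym: "transpose T = T" and Trow: "\<forall>i. (\<Sum>j\<in>UNIV. T$i$j) = 1"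
    and Tnn: "\<forall>i j. T$i$j \<ge> 0"
begin

lemma By_shift: fixes x :: "'n \<Rightarrow> real^'r^'d"
  shows "By T x i = By T (\<lambda>i. x i - a) i"
proof -
  have "(\<Sum>j\<in>UNIV. T$i$j *\<^sub>R (x j - a)) = (\<Sum>j\<in>UNIV. T$i$j *\<^sub>R x j) - (\<Sum>j\<in>UNIV. T$i$j) *\<^sub>R a"
    by (simp add: scaleR_diff_right sum_subtractf scaleR_sum_left)
  then show ?thesis using Trow by (simp add: By_def)
qed

lemma By_sum_zero: fixes x :: "'n \<Rightarrow> real^'r^'d"
  shows "(\<Sum>i\<in>UNIV. By T x i) = 0"
proof -
  have "(\<Sum>i\<in>UNIV. \<Sum>j\<in>UNIV. T$i$j *\<^sub>R x j) = (\<Sum>j\<in>UNIV. \<Sum>i\<in>UNIV. T$i$j *\<^sub>R x j)"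
    by (rule sum.swap)
  also have "\<dots> = (\<Sum>j\<in>UNIV. x j)"
    by (simp add: scaleR_sum_left[symmetric] Tcol[OF Tsym Trow Tnn])
  finally show ?thesis by (simp add: By_def sum_subtractf)
qed

lemma By_alt: fixes x :: "'n \<Rightarrow> real^'r^'d"
  shows "By T x i = (\<Sum>j\<in>UNIV. T$i$j *\<^sub>R (x i - x j))"
proof -
  have "(\<Sum>j\<in>UNIV. T$i$j *\<^sub>R (x i - x j)) = (\<Sum>j\<in>UNIV. T$i$j) *\<^sub>R x i - (\<Sum>j\<in>UNIV. T$i$j *\<^sub>R x j)"
    by (simp add: scaleR_diff_right sum_subtractf scaleR_sum_left)
  then show ?thesis using Trow by (simp add: By_def)
qed

lemma grad_sum_bound: fixes x :: "'n \<Rightarrow> real^'r^'d"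
  assumes xs: "\<forall>i. x i \<in> stiefel"
  shows "norm (\<Sum>i\<in>UNIV. proj_tangent (x i) (By T x i)) \<le> Qf T x x"
proof -
  define M where "M i = transpose (x i) ** By T x i + transpose (By T x i) ** x i" for i
  have M: "M i = (\<Sum>j\<in>UNIV. T$i$j *\<^sub>R (transpose (x i - x j) ** (x i - x j)))" for i
  proof -
    have "M i = (\<Sum>j\<in>UNIV. T$i$j *\<^sub>R (transpose (x i) ** (x i - x j) + transpose (x i - x j) ** x i))"
      by (simp add: M_def By_alt mat_sum_right mat_sum_left transpose_sum transpose_scalar
          mat_scaleR_right mat_scaleR_left scaleR_add_right sum.distrib)
    also have "\<dots> = (\<Sum>j\<in>UNIV. T$i$j *\<^sub>R (transpose (x i - x j) ** (x i - x j)))"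
      using xs by (simp add: stiefel_sym_sq)
    finally show ?thesis .
  qed
  have Mn: "norm (M i) \<le> (\<Sum>j\<in>UNIV. T$i$j * (norm (x i - x j))\<^sup>2)" for i
  proof -
    have "norm (M i) \<le> (\<Sum>j\<in>UNIV. norm (T$i$j *\<^sub>R (transpose (x i - x j) ** (x i - x j))))"
      unfolding M by (rule norm_sum)
    also have "\<dots> \<le> (\<Sum>j\<in>UNIV. T$i$j * (norm (x i - x j))\<^sup>2)"
    proof (rule sum_mono)
      fix j
      have "norm (transpose (x i - x j) ** (x i - x j)) \<le> norm (transpose (x i - x j)) * norm (x i - x j)"
        by (rule frob_mult)
      then show "norm (T$i$j *\<^sub>R (transpose (x i - x j) ** (x i - x j))) \<le> T$i$j * (norm (x i - x j))\<^sup>2"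
        using Tnn by (simp add: norm_transpose power2_eq_square mult_left_mono)
    qed
    finally show ?thesis .
  qed
  have "(\<Sum>i\<in>UNIV. proj_tangent (x i) (By T x i)) = (\<Sum>i\<in>UNIV. By T x i) - (\<Sum>i\<in>UNIV. (1/2) *\<^sub>R (x i ** M i))"
    by (simp add: proj_tangent_def M_def sum_subtractf mat_scaleR_right)
  also have "\<dots> = - ((1/2) *\<^sub>R (\<Sum>i\<in>UNIV. x i ** M i))" by (simp add: By_sum_zero scaleR_sum_right)
  finally have "norm (\<Sum>i\<in>UNIV. proj_tangent (x i) (By T x i)) = (1/2) * norm (\<Sum>i\<in>UNIV. x i ** M i)" by simp
  also have "\<dots> \<le> (1/2) * (\<Sum>i\<in>UNIV. norm (x i ** M i))" by (simp add: norm_sum)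
  also have "\<dots> = (1/2) * (\<Sum>i\<in>UNIV. norm (M i))" using xs by (simp add: stiefel_norm_mult)
  also have "\<dots> \<le> (1/2) * (\<Sum>i\<in>UNIV. \<Sum>j\<in>UNIV. T$i$j * (norm (x i - x j))\<^sup>2)"
    by (simp add: sum_mono Mn)
  also have "\<dots> = Qf T x x" by (simp add: Qf_self[OF Tsym Trow Tnn])
  finally show ?thesis .
qed

end

lemma matpow_comm: "W ** matpow W k = matpow W k ** W"
  by (induction k) (simp_all add: matrix_mul_assoc)

lemma matpow_sym: assumes "transpose W = W" shows "transpose (matpow W k) = matpow W k"
  by (induction k) (simp_all add: matrix_transpose_mul assms matpow_comm)

lemma matpow_row: fixes W :: "real^'n::finite^'n"
  assumes "\<forall>i. (\<Sum>j\<in>UNIV. W $ i $ j) = 1"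
  shows "\<forall>i. (\<Sum>j\<in>UNIV. matpow W k $ i $ j) = 1"
proof (induction k)
  case 0
  show ?case
  proof
    fix i :: 'n
    have "\<And>j. (mat 1 :: real^'n^'n) $ i $ j = (if i = j then 1 else 0)" by (simp add: mat_def)
    then show "(\<Sum>j\<in>UNIV. matpow W 0 $ i $ j) = 1" by simp
  qed
next
  case (Suc k)
  show ?case
  proof
    fix i
    have "(\<Sum>j\<in>UNIV. matpow W (Suc k) $ i $ j) = (\<Sum>l\<in>UNIV. W$i$l * (\<Sum>j\<in>UNIV. matpow W k $ l $ j))"
      by (simp add: matrix_matrix_mult_def sum_distrib_left) (rule sum.swap)
    also have "\<dots> = 1" using Suc assms by simp
    finally show "(\<Sum>j\<in>UNIV. matpow W (Suc k) $ i $ j) = 1" .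
  qed
qed

lemma matpow_nn: fixes W :: "real^'n::finite^'n"
  assumes "\<forall>i j. W $ i $ j \<ge> 0"
  shows "\<forall>i j. matpow W k $ i $ j \<ge> 0"
  by (induction k) (auto simp: mat_def matrix_matrix_mult_def assms intro!: sum_nonneg mult_nonneg_nonneg)

lemma norm_add_sq: fixes x y :: "'a::real_normed_vector"
  shows "(norm (x + y))\<^sup>2 \<le> 2 * (norm x)\<^sup>2 + 2 * (norm y)\<^sup>2"
proof -
  have "(norm (x + y))\<^sup>2 \<le> (norm x + norm y)\<^sup>2"
    by (simp add: norm_triangle_ineq power_mono)
  also have "\<dots> \<le> 2 * (norm x)\<^sup>2 + 2 * (norm y)\<^sup>2"
    using sum_squares_bound[of "norm x" "norm y"] by (simp add: power2_eq_square algebra_simps)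
  finally show ?thesis .
qed

theorem mainTheorem1:
  fixes W :: "real^'n::finite^'n"
    and R :: "real^'r::finite^'d::finite \<Rightarrow> real^'r^'d \<Rightarrow> real^'r^'d"
    and t :: nat
    and M \<delta>1 \<delta>2 \<alpha> \<beta> :: real
    and x0 x1 u :: "'n \<Rightarrow> real^'r^'d"
    and xbar0 xbar1 :: "real^'r^'d"
  assumes dr: "CARD('r) \<le> CARD('d)"
    and Wsym: "transpose W = W"
    and Wnonneg: "\<forall>i j. W $ i $ j \<ge> 0"
    and Wrow: "\<forall>i. (\<Sum>j\<in>UNIV. W $ i $ j) = 1"
    and Wcol: "\<forall>j. (\<Sum>i\<in>UNIV. W $ i $ j) = 1"
    and t1: "t \<ge> 1"
    and retr: "is_retraction R"
    and Mpos: "M > 0"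
    and Mbound: "\<forall>x\<in>stiefel. \<forall>\<xi>\<in>tangent_space x. norm (R x \<xi> - (x + \<xi>)) \<le> M * (norm \<xi>)\<^sup>2"
    and d1pos: "\<delta>1 > 0" and d2pos: "\<delta>2 > 0"
    and d1d2: "\<delta>1 \<le> \<delta>2 / (5 * sqrt (real CARD('r)))"
    and d2: "\<delta>2 \<le> 1/6"
    and iam0: "is_IAM x0 xbar0"
    and iam1: "is_IAM x1 xbar1"
    and N0: "in_N1 \<delta>1 x0 xbar0 \<and> in_N2 \<delta>2 x0 xbar0"
    and N1: "in_N1 \<delta>1 x1 xbar1"
    and utan: "\<forall>i. u i \<in> tangent_space (x0 i)"
    and step: "\<forall>i. x1 i = R (x0 i) ((- \<alpha>) *\<^sub>R grad_phi W t x0 i + \<beta> *\<^sub>R u i)"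
    and alpha: "0 \<le> \<alpha>" "\<alpha> \<le> 1 / M"
    and beta: "\<beta> \<ge> 0"
  shows "norm (xbar0 - xbar1) \<le>
     1 / (1 - 2 * \<delta>1\<^sup>2) *
       ((2 * (L_const W t)\<^sup>2 * \<alpha> + L_const W t * \<alpha>) / real CARD('n) * (\<Sum>i\<in>UNIV. (norm (x0 i - xbar0))\<^sup>2)
        + \<beta> * norm ((1 / real CARD('n)) *\<^sub>R (\<Sum>i\<in>UNIV. u i))
        + 2 * M * \<beta>\<^sup>2 / real CARD('n) * (\<Sum>i\<in>UNIV. (norm (u i))\<^sup>2))"

proof -
  let ?n = "real CARD('n)"
  define T where "T = matpow W t"
  define L where "L = L_const W t"
  have LT: "L = 1 - min_eigenvalue T" by (simp add: L_def T_def L_const_def)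
  have Tsym: "transpose T = T" unfolding T_def by (rule matpow_sym[OF Wsym])
  have Trow: "\<forall>i. (\<Sum>j\<in>UNIV. T$i$j) = 1" unfolding T_def by (rule matpow_row[OF Wrow])
  have Tnn: "\<forall>i j. T$i$j \<ge> 0" unfolding T_def by (rule matpow_nn[OF Wnonneg])
  have n0: "?n > 0" by simp
  have x0s: "\<forall>i. x0 i \<in> stiefel" using N0 by (simp add: in_N1_def)
  have x1s: "\<forall>i. x1 i \<in> stiefel" using N1 by (simp add: in_N1_def)
  have a: "xbar0 \<in> stiefel" using iam0 by (simp add: is_IAM_def)
  have b: "xbar1 \<in> stiefel" using iam1 by (simp add: is_IAM_def)
  define D0 where "D0 = (\<Sum>i\<in>UNIV. (norm (x0 i - xbar0))\<^sup>2)"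
  define D1 where "D1 = (\<Sum>i\<in>UNIV. (norm (x1 i - xbar1))\<^sup>2)"
  have D0b: "D0 \<le> ?n * \<delta>1\<^sup>2" using N0 by (simp add: in_N1_def D0_def)
  have D1b: "D1 \<le> ?n * \<delta>1\<^sup>2" using N1 by (simp add: in_N1_def D1_def)
  have D0nn: "D0 \<ge> 0" by (simp add: D0_def sum_nonneg)
  have sr: "sqrt (real CARD('r)) \<ge> 1" by simp
  have "\<delta>2 / (5 * sqrt (real CARD('r))) \<le> \<delta>2 / 5"
    using sr d2pos by (intro divide_left_mono) auto
  then have d1s: "\<delta>1 \<le> 1/30" using d1d2 d2 by simp
  have d1sq: "\<delta>1\<^sup>2 \<le> 1/900"
  proof -
    have "\<delta>1\<^sup>2 \<le> (1/30)\<^sup>2" using d1s d1pos by (intro power_mono) auto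
    thus ?thesis by (simp add: power2_eq_square)
  qed
  define c where "c = 1 - 2 * \<delta>1\<^sup>2"
  have c0: "c > 0" using d1sq by (simp add: c_def)
  define A0 where "A0 = (1 / ?n) *\<^sub>R (\<Sum>i\<in>UNIV. x0 i)"
  define A1 where "A1 = (1 / ?n) *\<^sub>R (\<Sum>i\<in>UNIV. x1 i)"
  define S0 where "S0 = transpose xbar0 ** A0"
  define S1 where "S1 = transpose xbar1 ** A1"
  have P0: "A0 = xbar0 ** S0" "transpose S0 = S0"
    using iam_polar[OF iam0 retr Mbound x0s] unfolding A0_def S0_def by auto
  have P1: "A1 = xbar1 ** S1" "transpose S1 = S1"
    using iam_polar[OF iam1 retr Mbound x1s] unfolding A1_def S1_def by auto
  have lb0: "inner S0 (transpose Y ** Y) \<ge> (1 - D0 / (2 * ?n)) * (norm Y)\<^sup>2" for Y :: "real^'r^'d"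
    unfolding D0_def by (rule lower_bound[OF a x0s A0_def P0])
  have lb1: "inner S1 (transpose Y ** Y) \<ge> (1 - D1 / (2 * ?n)) * (norm Y)\<^sup>2" for Y :: "real^'r^'d"
    unfolding D1_def by (rule lower_bound[OF b x1s A1_def P1])
  have lc: "inner (xbar0 ** S0 - xbar1 ** S1) (xbar0 - xbar1)
      \<ge> ((1 - D0 / (2 * ?n)) + (1 - D1 / (2 * ?n)))/2 * (norm (xbar0 - xbar1))\<^sup>2"
    by (rule lipschitz_core[OF a b P0(2) P1(2) lb0 lb1])
  have h0: "D0 / (2 * ?n) \<le> \<delta>1\<^sup>2 / 2" using D0b n0 by (simp add: field_simps)
  have h1: "D1 / (2 * ?n) \<le> \<delta>1\<^sup>2 / 2" using D1b n0 by (simp add: field_simps)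
  have aux: "\<And>X Y d::real. X \<le> d/2 \<Longrightarrow> Y \<le> d/2 \<Longrightarrow> 0 \<le> d \<Longrightarrow> 1 - 2*d \<le> ((1-X)+(1-Y))/2"
    by (auto simp: field_simps)
  have "c \<le> ((1 - D0 / (2 * ?n)) + (1 - D1 / (2 * ?n)))/2"
    unfolding c_def by (rule aux[OF h0 h1]) simp
  then have "c * (norm (xbar0 - xbar1))\<^sup>2 \<le> inner (A0 - A1) (xbar0 - xbar1)"
    using lc P0(1) P1(1) by (smt (verit) mult_right_mono zero_le_power2)
  also have "\<dots> \<le> norm (A0 - A1) * norm (xbar0 - xbar1)" by (rule norm_cauchy_schwarz)
  finally have cA: "c * norm (xbar0 - xbar1) \<le> norm (A0 - A1)"
    by (cases "norm (xbar0 - xbar1) = 0") (simp_all add: power2_eq_square)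
  define g where "g i = proj_tangent (x0 i) (By T x0 i)" for i
  have gg: "grad_phi W t x0 i = g i" for i by (simp add: grad_phi_def g_def By_def T_def)
  define \<xi> where "\<xi> i = (- \<alpha>) *\<^sub>R g i + \<beta> *\<^sub>R u i" for i
  have \<xi>t: "\<xi> i \<in> tangent_space (x0 i)" for i
    unfolding \<xi>_def g_def
    by (intro tangent_add tangent_scale proj_tangent_in) (use x0s utan in auto)
  define e where "e i = x1 i - (x0 i + \<xi> i)" for i
  have en: "norm (e i) \<le> M * (norm (\<xi> i))\<^sup>2" for i
    using Mbound x0s \<xi>t step unfolding e_def \<xi>_def by (simp add: gg)
  have dx: "x0 i - x1 i = \<alpha> *\<^sub>R g i - \<beta> *\<^sub>R u i - e i" for i
    by (simp add: e_def \<xi>_def algebra_simps)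
  have "A0 - A1 = (1 / ?n) *\<^sub>R (\<Sum>i\<in>UNIV. x0 i - x1 i)"
    by (simp add: A0_def A1_def sum_subtractf scaleR_diff_right)
  also have "\<dots> = (1 / ?n) *\<^sub>R (\<alpha> *\<^sub>R (\<Sum>i\<in>UNIV. g i) - \<beta> *\<^sub>R (\<Sum>i\<in>UNIV. u i) - (\<Sum>i\<in>UNIV. e i))"
    by (simp add: dx sum_subtractf scaleR_sum_right)
  finally have "norm (A0 - A1) = (1 / ?n) * norm (\<alpha> *\<^sub>R (\<Sum>i\<in>UNIV. g i) - \<beta> *\<^sub>R (\<Sum>i\<in>UNIV. u i) - (\<Sum>i\<in>UNIV. e i))"
    by simp
  also have "\<dots> \<le> (1 / ?n) * (\<alpha> * norm (\<Sum>i\<in>UNIV. g i) + \<beta> * norm (\<Sum>i\<in>UNIV. u i) + (\<Sum>i\<in>UNIV. norm (e i)))"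
  proof (rule mult_left_mono)
    have "norm (\<alpha> *\<^sub>R (\<Sum>i\<in>UNIV. g i) - \<beta> *\<^sub>R (\<Sum>i\<in>UNIV. u i) - (\<Sum>i\<in>UNIV. e i))
       \<le> norm (\<alpha> *\<^sub>R (\<Sum>i\<in>UNIV. g i)) + norm (\<beta> *\<^sub>R (\<Sum>i\<in>UNIV. u i)) + norm (\<Sum>i\<in>UNIV. e i)"
      by (metis (no_types, opaque_lifting) add_mono norm_triangle_ineq4 order_trans order_refl)
    also have "\<dots> \<le> \<alpha> * norm (\<Sum>i\<in>UNIV. g i) + \<beta> * norm (\<Sum>i\<in>UNIV. u i) + (\<Sum>i\<in>UNIV. norm (e i))"
      using alpha beta by (simp add: norm_sum)
    finally show "norm (\<alpha> *\<^sub>R (\<Sum>i\<in>UNIV. g i) - \<beta> *\<^sub>R (\<Sum>i\<in>UNIV. u i) - (\<Sum>i\<in>UNIV. e i))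
       \<le> \<alpha> * norm (\<Sum>i\<in>UNIV. g i) + \<beta> * norm (\<Sum>i\<in>UNIV. u i) + (\<Sum>i\<in>UNIV. norm (e i))" .
  qed simp
  finally have A01: "norm (A0 - A1) \<le> (1 / ?n) * (\<alpha> * norm (\<Sum>i\<in>UNIV. g i) + \<beta> * norm (\<Sum>i\<in>UNIV. u i) + (\<Sum>i\<in>UNIV. norm (e i)))" .
  define z where "z i = x0 i - xbar0" for i
  have Zs: "(\<Sum>i\<in>UNIV. (norm (z i))\<^sup>2) = D0" by (simp add: z_def D0_def)
  have Qxz: "Qf T x0 x0 = Qf T z z"
    by (simp add: Qf_self[OF Tsym Trow Tnn] z_def)
  have gsum: "norm (\<Sum>i\<in>UNIV. g i) \<le> L * D0"
  proof -
    have "norm (\<Sum>i\<in>UNIV. g i) \<le> Qf T x0 x0" unfolding g_def by (rule grad_sum_bound[OF Tsym Trow Tnn x0s])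
    also have "\<dots> \<le> L * D0" using Qf_upper[OF Tsym Trow Tnn, of z] by (simp add: Qxz Zs LT)
    finally show ?thesis .
  qed
  have gsq: "(\<Sum>i\<in>UNIV. (norm (g i))\<^sup>2) \<le> L\<^sup>2 * D0"
  proof -
    have "(\<Sum>i\<in>UNIV. (norm (g i))\<^sup>2) \<le> (\<Sum>i\<in>UNIV. (norm (By T x0 i))\<^sup>2)"
      unfolding g_def using x0s by (intro sum_mono power_mono proj_norm_le) auto
    also have "\<dots> = (\<Sum>i\<in>UNIV. (norm (By T z i))\<^sup>2)"
      unfolding z_def using By_shift[OF Tsym Trow Tnn, of x0 _ xbar0] by simp
    also have "\<dots> \<le> L\<^sup>2 * D0" using By_bound[OF Tsym Trow Tnn, of z] by (simp add: Zs LT)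
    finally show ?thesis .
  qed
  have Ma: "M * \<alpha>\<^sup>2 \<le> \<alpha>"
  proof -
    have "M * \<alpha> \<le> 1" using alpha Mpos by (simp add: field_simps)
    then have "(M * \<alpha>) * \<alpha> \<le> 1 * \<alpha>" using alpha by (intro mult_right_mono) auto
    thus ?thesis by (simp add: power2_eq_square mult_ac)
  qed
  have esum: "(\<Sum>i\<in>UNIV. norm (e i)) \<le> 2 * \<alpha> * L\<^sup>2 * D0 + 2 * M * \<beta>\<^sup>2 * (\<Sum>i\<in>UNIV. (norm (u i))\<^sup>2)"
  proof -
    have "(\<Sum>i\<in>UNIV. norm (e i)) \<le> (\<Sum>i\<in>UNIV. M * (2 * \<alpha>\<^sup>2 * (norm (g i))\<^sup>2 + 2 * \<beta>\<^sup>2 * (norm (u i))\<^sup>2))"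
    proof (rule sum_mono)
      fix i
      have "(norm (\<xi> i))\<^sup>2 \<le> 2 * (norm ((- \<alpha>) *\<^sub>R g i))\<^sup>2 + 2 * (norm (\<beta> *\<^sub>R u i))\<^sup>2"
        unfolding \<xi>_def by (rule norm_add_sq)
      also have "\<dots> = 2 * \<alpha>\<^sup>2 * (norm (g i))\<^sup>2 + 2 * \<beta>\<^sup>2 * (norm (u i))\<^sup>2"
        by (simp add: power_mult_distrib)
      finally have "M * (norm (\<xi> i))\<^sup>2 \<le> M * (2 * \<alpha>\<^sup>2 * (norm (g i))\<^sup>2 + 2 * \<beta>\<^sup>2 * (norm (u i))\<^sup>2)"
        using Mpos by (intro mult_left_mono) auto
      then show "norm (e i) \<le> M * (2 * \<alpha>\<^sup>2 * (norm (g i))\<^sup>2 + 2 * \<beta>\<^sup>2 * (norm (u i))\<^sup>2)"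
        using en[of i] by linarith
    qed
    also have "\<dots> = 2 * (M * \<alpha>\<^sup>2) * (\<Sum>i\<in>UNIV. (norm (g i))\<^sup>2) + 2 * M * \<beta>\<^sup>2 * (\<Sum>i\<in>UNIV. (norm (u i))\<^sup>2)"
      by (simp add: sum.distrib sum_distrib_left algebra_simps)
    also have "\<dots> \<le> 2 * \<alpha> * (L\<^sup>2 * D0) + 2 * M * \<beta>\<^sup>2 * (\<Sum>i\<in>UNIV. (norm (u i))\<^sup>2)"
    proof -
      have G0: "(\<Sum>i\<in>UNIV. (norm (g i))\<^sup>2) \<ge> 0" by (simp add: sum_nonneg)
      have "(M * \<alpha>\<^sup>2) * (\<Sum>i\<in>UNIV. (norm (g i))\<^sup>2) \<le> \<alpha> * (L\<^sup>2 * D0)"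
        using Ma gsq G0 alpha by (meson mult_mono order_trans)
      thus ?thesis by simp
    qed
    finally show ?thesis by (simp add: mult_ac)
  qed
  have "norm (A0 - A1) \<le> (1 / ?n) * (\<alpha> * (L * D0) + \<beta> * norm (\<Sum>i\<in>UNIV. u i)
        + (2 * \<alpha> * L\<^sup>2 * D0 + 2 * M * \<beta>\<^sup>2 * (\<Sum>i\<in>UNIV. (norm (u i))\<^sup>2)))"
  proof -
    have "\<alpha> * norm (\<Sum>i\<in>UNIV. g i) \<le> \<alpha> * (L * D0)" using gsum alpha by (intro mult_left_mono) auto
    then show ?thesis using A01 esum n0
      by (smt (verit) divide_pos_pos mult_left_mono)
  qed
  also have "\<dots> = (2 * L\<^sup>2 * \<alpha> + L * \<alpha>) / ?n * D0 + \<beta> * norm ((1 / ?n) *\<^sub>R (\<Sum>i\<in>UNIV. u i))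
        + 2 * M * \<beta>\<^sup>2 / ?n * (\<Sum>i\<in>UNIV. (norm (u i))\<^sup>2)"
    using beta by (simp add: field_simps)
  finally have AK: "norm (A0 - A1) \<le> (2 * L\<^sup>2 * \<alpha> + L * \<alpha>) / ?n * D0 + \<beta> * norm ((1 / ?n) *\<^sub>R (\<Sum>i\<in>UNIV. u i))
        + 2 * M * \<beta>\<^sup>2 / ?n * (\<Sum>i\<in>UNIV. (norm (u i))\<^sup>2)" .
  have "norm (xbar0 - xbar1) \<le> norm (A0 - A1) / c" using cA c0 by (simp add: field_simps)
  also have "\<dots> \<le> ((2 * L\<^sup>2 * \<alpha> + L * \<alpha>) / ?n * D0 + \<beta> * norm ((1 / ?n) *\<^sub>R (\<Sum>i\<in>UNIV. u i))
        + 2 * M * \<beta>\<^sup>2 / ?n * (\<Sum>i\<in>UNIV. (norm (u i))\<^sup>2)) / c"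
    using AK c0 by (simp add: divide_right_mono)
  finally show ?thesis by (simp add: c_def L_def D0_def)
qed


end
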